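(* Let $c_1>0$ be a sufficiently small absolute constant and $K=\exp(c_1 s)$. There exists a set $V^*\subseteq\frac1{\sqrt d}\mathcal{H}_d$ with $|V^*|\le 16sK\le 2^s$ such that the set $$\mathcal{A}_{\mathsf{nice}}:=\{\mathbf{A}\in\mathcal{A}_{\mathsf{suc}}:|\mathcal{N}(\mathsf{O}^{\mathbf{M}_\mathbf{A}}(\mathbf{A},V^* ),d^{-8})|\ge 2^{s/\log d}\}$$ has size at least $\frac18\cdot 2^{d^2/2}$.
   Context: Setting: $d$ large, $\delta\in(0,1)$, $k=d^{1-\delta-o(1)}$, $s=d^{1-\delta/2}\log^2 d$, $\xi=2\exp(-\log^5 d)$, $\xi'=\sqrt d\xi$, $\mathcal{H}_d=\{-1,1\}^d$, $\mathbb{S}^d$ the unit sphere. A fixed deterministic $(k,n)$-protocol: on $\mathbf{A}\in\{-1,1\}^{(d/2)\times d}$ Alice sends $\mathbf{M}_\mathbf{A}\in\{0,1\}^{kd}$; after receiving $\mathbf{v}\in\frac1{\sqrt d}\mathcal{H}_d$ she sends $\mathbf{R}_{\mathbf{A},\mathbf{v}}\in(\mathsf{row}(\mathbf{A})\cup\{\mathsf{nil}\})^n$; Bob outputs a unit vector $\mathbf{x}_{\mathbf{M},\mathbf{v},\mathbf{R}}\in\mathbb{S}^d$, defined for all $\mathbf{M}$, $\mathbf{v}$, $\mathbf{R}\in(\{-1,1\}^d\cup\{\mathsf{nil}\})^n$; $\mathbf{x}_{\mathbf{A},\mathbf{v}}=\mathbf{x}_{\mathbf{M}_\mathbf{A},\mathbf{v},\mathbf{R}_{\mathbf{A},\mathbf{v}}}$.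 Success on $(\mathbf{A},\mathbf{v})$: $\|\mathbf{A}\mathbf{x}_{\mathbf{A},\mathbf{v}}\|_\infty\le\xi'$ and $|\langle\mathbf{v},\mathbf{x}_{\mathbf{A},\mathbf{v}}\rangle|\ge\sqrt{s/d}$; the protocol succeeds with probability at least $1/2$ over uniform $(\mathbf{A},\mathbf{v})$. $\mathcal{A}_{\mathsf{suc}}$: matrices $\mathbf{A}$ on which it succeeds with probability at least $1/4$ over uniform $\mathbf{v}$. Table $\mathsf{T}^{\mathbf{M}}(\mathbf{B},V)=\{\mathbf{x}_{\mathbf{M},\mathbf{v},\mathbf{R}}:\mathbf{v}\in V,\ \text{each entry of }\mathbf{R}\text{ is }\mathsf{nil}\text{ or a row of }\mathbf{B}\}$; orthogonal entries $\mathsf{O}^{\mathbf{M}}(\mathbf{B},V)=\{\mathbf{x}\in\mathsf{T}^{\mathbf{M}}(\mathbf{B},V):\|\mathbf{B}\mathbf{x}\|_\infty\le\xi'\}$. $\mathcal{N}(X,\alpha)$: a largest subset of $X$ with pairwise distances at least $\alpha$. *)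

theory Defs
  imports Complex_Main
begin

text \<open>Vectors in R^d are functions nat => real that vanish outside {0..<d};
  a (d/2) x d matrix is given by its rows A 0, ..., A (d div 2 - 1).\<close>

type_synonym vec = "nat \<Rightarrow> real"
type_synonym mat = "nat \<Rightarrow> vec"
type_synonym msg = "bool list"
type_synonym resp = "vec option list"   \<comment> \<open>None = nil\<close>

definition hcube :: "nat \<Rightarrow> vec set" where
  "hcube d = {x. (\<forall>i<d. x i = 1 \<or> x i = -1) \<and> (\<forall>i\<ge>d. x i = 0)}"

definition scube :: "nat \<Rightarrow> vec set" where
  "scube d = (\<lambda>x i. x i / sqrt (real d)) ` hcube d"

definition mats :: "nat \<Rightarrow> mat set" where
  "mats d = {A. (\<forall>j<d div 2. A j \<in> hcube d) \<and> (\<forall>j\<ge>d div 2. A j = (\<lambda>_. 0))}"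

definition rows :: "nat \<Rightarrow> mat \<Rightarrow> vec set" where
  "rows d A = A ` {..<d div 2}"

definition ip :: "nat \<Rightarrow> vec \<Rightarrow> vec \<Rightarrow> real" where
  "ip d u v = (\<Sum>i<d. u i * v i)"

definition enorm :: "nat \<Rightarrow> vec \<Rightarrow> real" where
  "enorm d x = sqrt (ip d x x)"

definition unit_sphere :: "nat \<Rightarrow> vec set" where
  "unit_sphere d = {x. enorm d x = 1 \<and> (\<forall>i\<ge>d. x i = 0)}"

definition orth_ok :: "nat \<Rightarrow> real \<Rightarrow> mat \<Rightarrow> vec \<Rightarrow> bool" where
  "orth_ok d eps B x = (\<forall>j<d div 2. \<bar>ip d (B j) x\<bar> \<le> eps)"

definition responses :: "nat \<Rightarrow> vec set \<Rightarrow> resp set" where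
  "responses n Rws = {R. length R = n \<and> (\<forall>r\<in>set R. r = None \<or> (\<exists>y\<in>Rws. r = Some y))}"

definition table :: "nat \<Rightarrow> nat \<Rightarrow> (msg \<Rightarrow> vec \<Rightarrow> resp \<Rightarrow> vec) \<Rightarrow> msg \<Rightarrow> mat \<Rightarrow> vec set \<Rightarrow> vec set" where
  "table d n X M B V = {X M v R | v R. v \<in> V \<and> R \<in> responses n (rows d B)}"

definition orth_entries :: "nat \<Rightarrow> nat \<Rightarrow> real \<Rightarrow> (msg \<Rightarrow> vec \<Rightarrow> resp \<Rightarrow> vec) \<Rightarrow> msg \<Rightarrow> mat \<Rightarrow> vec set \<Rightarrow> vec set" where
  "orth_entries d n eps X M B V = {x \<in> table d n X M B V. orth_ok d eps B x}"

definition separated :: "nat \<Rightarrow> real \<Rightarrow> vec set \<Rightarrow> bool" where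
  "separated d \<alpha> Y = (\<forall>x\<in>Y. \<forall>y\<in>Y. x \<noteq> y \<longrightarrow> enorm d (\<lambda>i. x i - y i) \<ge> \<alpha>)"

definition packing_size :: "nat \<Rightarrow> vec set \<Rightarrow> real \<Rightarrow> nat" where
  "packing_size d S \<alpha> = Max {card Y | Y. Y \<subseteq> S \<and> finite Y \<and> separated d \<alpha> Y}"

definition is_protocol :: "nat \<Rightarrow> nat \<Rightarrow> nat \<Rightarrow> (mat \<Rightarrow> msg) \<Rightarrow> (mat \<Rightarrow> vec \<Rightarrow> resp)
    \<Rightarrow> (msg \<Rightarrow> vec \<Rightarrow> resp \<Rightarrow> vec) \<Rightarrow> bool" where
  "is_protocol d k n Mf Rf X \<longleftrightarrow>
     (\<forall>A\<in>mats d. length (Mf A) = k * d) \<and>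
     (\<forall>A\<in>mats d. \<forall>v\<in>scube d. Rf A v \<in> responses n (rows d A)) \<and>
     (\<forall>M v R. length M = k * d \<longrightarrow> v \<in> scube d \<longrightarrow> R \<in> responses n (hcube d)
         \<longrightarrow> X M v R \<in> unit_sphere d)"

definition succeeds :: "nat \<Rightarrow> real \<Rightarrow> real \<Rightarrow> (mat \<Rightarrow> msg) \<Rightarrow> (mat \<Rightarrow> vec \<Rightarrow> resp)
    \<Rightarrow> (msg \<Rightarrow> vec \<Rightarrow> resp \<Rightarrow> vec) \<Rightarrow> mat \<Rightarrow> vec \<Rightarrow> bool" where
  "succeeds d eps s Mf Rf X A v \<longleftrightarrow>
     (let x = X (Mf A) v (Rf A v) in orth_ok d eps A x \<and> \<bar>ip d v x\<bar> \<ge> sqrt (s / real d))"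

definition protocol_succeeds :: "nat \<Rightarrow> real \<Rightarrow> real \<Rightarrow> (mat \<Rightarrow> msg) \<Rightarrow> (mat \<Rightarrow> vec \<Rightarrow> resp)
    \<Rightarrow> (msg \<Rightarrow> vec \<Rightarrow> resp \<Rightarrow> vec) \<Rightarrow> bool" where
  "protocol_succeeds d eps s Mf Rf X \<longleftrightarrow>
     real (card {(A, v) \<in> mats d \<times> scube d. succeeds d eps s Mf Rf X A v})
       \<ge> 1/2 * real (card (mats d \<times> scube d))"

definition A_suc :: "nat \<Rightarrow> real \<Rightarrow> real \<Rightarrow> (mat \<Rightarrow> msg) \<Rightarrow> (mat \<Rightarrow> vec \<Rightarrow> resp)
    \<Rightarrow> (msg \<Rightarrow> vec \<Rightarrow> resp \<Rightarrow> vec) \<Rightarrow> mat set" where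
  "A_suc d eps s Mf Rf X =
     {A \<in> mats d. real (card {v \<in> scube d. succeeds d eps s Mf Rf X A v}) \<ge> 1/4 * real (card (scube d))}"

text \<open>parameters (log = natural logarithm)\<close>
definition s_par :: "real \<Rightarrow> nat \<Rightarrow> real" where
  "s_par \<delta> d = real d powr (1 - \<delta>/2) * (ln (real d))^2"

definition xi :: "nat \<Rightarrow> real" where
  "xi d = 2 * exp (- ((ln (real d))^5))"

definition xi' :: "nat \<Rightarrow> real" where
  "xi' d = sqrt (real d) * xi d"

end

theory Submission
  imports Defs "HOL-Library.FuncSet"
begin


lemma fact_even_ge_nat: "2^n * fact n \<le> (fact (2*n) :: nat)"
proof (induction n)
  case 0 then show ?case by simp
next
  case (Suc n)
  have e: "2 * Suc n = Suc (Suc (2*n))" by simp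
  have f: "fact (2 * Suc n) = Suc (Suc (2*n)) * (Suc (2*n) * (fact (2*n) :: nat))"
    unfolding e by (simp only: fact_Suc of_nat_id)
  have g: "2^(Suc n) * fact (Suc n) = (2 * Suc n) * (2^n * (fact n :: nat))"
    by (simp only: fact_Suc of_nat_id power_Suc mult.assoc mult.left_commute)
  have "2^n * fact n \<le> Suc (2*n) * (fact (2*n) :: nat)"
    using Suc.IH by (rule order_trans) simp
  hence "(2 * Suc n) * (2^n * (fact n :: nat)) \<le> Suc (Suc (2*n)) * (Suc (2*n) * (fact (2*n) :: nat))"
    by (rule mult_mono[rotated]) auto
  thus ?case unfolding f g .
qed

lemma fact_even_ge: "2^n * fact n \<le> (fact (2*n) :: real)"
proof -
  have "real (2^n * fact n) \<le> real (fact (2*n))" using fact_even_ge_nat[of n] by (rule of_nat_mono)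
  thus ?thesis by simp
qed

lemma cosh_le: "exp x + exp (-x) \<le> 2 * exp ((x::real)^2/2)"
proof -
  have c: "(\<lambda>n. if even n then x ^ n / fact n else 0) sums cosh x"
  proof -
    have "(\<lambda>n. if even n then x ^ n /\<^sub>R fact n else 0) = (\<lambda>n. if even n then x ^ n / fact n else 0)"
      by (rule ext) (simp add: field_simps)
    with cosh_converges[of x] show ?thesis by simp
  qed
  have "(\<lambda>n. (\<lambda>n. if even n then x ^ n / fact n else 0) (2*n)) sums cosh x"
    by (rule iffD2[OF sums_mono_reindex c]) (auto simp: strict_mono_def elim!: evenE)
  hence c2: "(\<lambda>n. x^(2*n) / fact (2*n)) sums cosh x" by simp
  have e2: "(\<lambda>n. (x^2/2)^n / fact n) sums exp (x^2/2)"
  proof -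
    have "(\<lambda>n. (x^2/2) ^ n /\<^sub>R fact n) = (\<lambda>n. (x^2/2)^n / fact n)"
      by (rule ext) (simp add: field_simps)
    with exp_converges[of "x^2/2"] show ?thesis by simp
  qed
  have le: "x^(2*n) / fact (2*n) \<le> (x^2/2)^n / fact n" for n
  proof -
    have "(x^2/2)^n / fact n = x^(2*n) / (2^n * fact n)"
      by (simp add: power_divide power_mult)
    moreover have "x^(2*n) / fact (2*n) \<le> x^(2*n) / (2^n * fact n)"
      by (rule divide_left_mono) (auto simp: fact_even_ge power_mult)
    ultimately show ?thesis by simp
  qed
  have "cosh x \<le> exp (x^2/2)" using sums_le[OF _ c2 e2] le by blast
  thus ?thesis by (simp add: cosh_def)
qed

lemma hcube_0: "hcube 0 = {\<lambda>_. 0}"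
  by (auto simp: hcube_def)

lemma hcube_Suc: "hcube (Suc d) = (\<lambda>(w,b). w(d := b)) ` (hcube d \<times> {1,-1})"
proof (intro equalityI subsetI)
  fix x assume x: "x \<in> hcube (Suc d)"
  have "x(d := 0) \<in> hcube d" using x by (auto simp: hcube_def)
  moreover have "x d \<in> {1,-1}" using x by (auto simp: hcube_def)
  ultimately have m: "(x(d:=0), x d) \<in> hcube d \<times> {1,-1}" by simp
  show "x \<in> (\<lambda>(w,b). w(d := b)) ` (hcube d \<times> {1,-1})"
    by (rule image_eqI[OF _ m]) simp
next
  fix x assume "x \<in> (\<lambda>(w,b). w(d := b)) ` (hcube d \<times> {1,-1})"
  then obtain w b where "w \<in> hcube d" "b \<in> {1,-1}" "x = w(d:=b)" by auto
  then show "x \<in> hcube (Suc d)" by (auto simp: hcube_def less_Suc_eq)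
qed

lemma hcube_inj: "inj_on (\<lambda>(w,b). w(d := b)) (hcube d \<times> B)"
proof (rule inj_onI, clarsimp)
  fix w b v c assume w: "w \<in> hcube d" and v: "v \<in> hcube d" and e: "w(d := b) = v(d := c)"
  have bc: "b = c" using fun_cong[OF e, of d] by simp
  have "w i = v i" for i
  proof (cases "i = d")
    case True then show ?thesis using w v by (auto simp: hcube_def)
  next
    case False then show ?thesis using fun_cong[OF e, of i] by simp
  qed
  then show "w = v \<and> b = c" using bc by auto
qed

lemma hcube_fin_card: "finite (hcube d) \<and> card (hcube d) = 2^d"
proof (induction d)
  case 0 then show ?case by (simp add: hcube_0)
next
  case (Suc d)
  have "card (hcube (Suc d)) = card (hcube d \<times> {1::real,-1})"
    unfolding hcube_Suc by (rule card_image[OF hcube_inj])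
  also have "\<dots> = 2^d * 2" using Suc by (simp add: card_cartesian_product)
  finally show ?case using Suc by (simp add: hcube_Suc)
qed

lemma hcube_mgf:
  "(\<Sum>w\<in>hcube d. exp (l * (\<Sum>i<d. w i * y i))) \<le> 2^d * exp (l^2 * (\<Sum>i<d. (y i)^2) / 2)"
proof (induction d)
  case 0 then show ?case by (simp add: hcube_0)
next
  case (Suc d)
  let ?F = "\<lambda>w. exp (l * (\<Sum>i<d. w i * y i))"
  have fin: "finite (hcube d)" using hcube_fin_card by blast
  have "(\<Sum>w\<in>hcube (Suc d). exp (l * (\<Sum>i<Suc d. w i * y i)))
      = (\<Sum>p\<in>hcube d \<times> {1,-1}. exp (l * (\<Sum>i<Suc d. ((\<lambda>(w,b). w(d := b)) p) i * y i)))"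
    unfolding hcube_Suc by (rule sum.reindex[OF hcube_inj, unfolded comp_def])
  also have "\<dots> = (\<Sum>w\<in>hcube d. \<Sum>b\<in>{1::real,-1}. exp (l * (\<Sum>i<Suc d. (w(d:=b)) i * y i)))"
    unfolding sum.cartesian_product by (rule sum.cong) auto
  also have "\<dots> = (\<Sum>w\<in>hcube d. ?F w * (exp (l * y d) + exp (- (l * y d))))"
  proof (rule sum.cong[OF refl])
    fix w assume "w \<in> hcube d"
    have e: "(\<Sum>i<d. (w(d:=b)) i * y i) = (\<Sum>i<d. w i * y i)" for b
      by (rule sum.cong) auto
    show "(\<Sum>b\<in>{1::real,-1}. exp (l * (\<Sum>i<Suc d. (w(d:=b)) i * y i))) = ?F w * (exp (l * y d) + exp (- (l * y d)))"
      by (simp add: e distrib_left exp_add)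
  qed
  also have "\<dots> \<le> (\<Sum>w\<in>hcube d. ?F w * (2 * exp ((l * y d)^2/2)))"
    by (rule sum_mono, rule mult_left_mono[OF cosh_le]) simp
  also have "\<dots> = (\<Sum>w\<in>hcube d. ?F w) * (2 * exp ((l * y d)^2/2))"
    by (simp add: sum_distrib_right)
  also have "\<dots> \<le> 2^d * exp (l^2 * (\<Sum>i<d. (y i)^2) / 2) * (2 * exp ((l * y d)^2/2))"
    by (rule mult_right_mono[OF Suc]) simp
  also have "\<dots> = 2^Suc d * exp (l^2 * (\<Sum>i<Suc d. (y i)^2) / 2)"
    by (simp add: exp_add[symmetric] algebra_simps power_mult_distrib add_divide_distrib)
  finally show ?case .
qed

lemma hcube_tail1:
  assumes "(\<Sum>i<d. (y i)^2) \<le> 1" "a \<ge> 0"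
  shows "card {w\<in>hcube d. a \<le> (\<Sum>i<d. w i * y i)} \<le> 2^d * exp (-(a^2)/2)"
proof -
  let ?S = "{w\<in>hcube d. a \<le> (\<Sum>i<d. w i * y i)}"
  have fin: "finite (hcube d)" using hcube_fin_card by blast
  have "card ?S * exp (a^2) = (\<Sum>w\<in>?S. exp (a * a))" by (simp add: power2_eq_square)
  also have "\<dots> \<le> (\<Sum>w\<in>?S. exp (a * (\<Sum>i<d. w i * y i)))"
    by (rule sum_mono) (auto intro: mult_left_mono simp: assms)
  also have "\<dots> \<le> (\<Sum>w\<in>hcube d. exp (a * (\<Sum>i<d. w i * y i)))"
    by (rule sum_mono2[OF fin]) auto
  also have "\<dots> \<le> 2^d * exp (a^2 * (\<Sum>i<d. (y i)^2) / 2)" by (rule hcube_mgf)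
  also have "\<dots> \<le> 2^d * exp (a^2 / 2)"
    using assms by (auto intro!: mult_left_mono divide_right_mono mult_left_le)
  finally have "card ?S * exp (a^2) \<le> 2^d * exp (a^2/2)" .
  hence "card ?S \<le> 2^d * exp (a^2/2) / exp (a^2)" by (simp add: field_simps)
  also have "\<dots> = 2^d * exp (-(a^2)/2)"
  proof -
    have "exp (a^2/2) = exp (-(a^2)/2) * exp (a^2)" by (simp add: exp_add[symmetric])
    thus ?thesis by simp
  qed
  finally show ?thesis .
qed

lemma hcube_tail:
  assumes "(\<Sum>i<d. (y i)^2) \<le> 1" "a \<ge> 0"
  shows "card {w\<in>hcube d. a \<le> \<bar>\<Sum>i<d. w i * y i\<bar>} \<le> 2 * 2^d * exp (-(a^2)/2)"
proof -
  have fin: "finite (hcube d)" using hcube_fin_card by blast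
  have "{w\<in>hcube d. a \<le> \<bar>\<Sum>i<d. w i * y i\<bar>} \<subseteq> {w\<in>hcube d. a \<le> (\<Sum>i<d. w i * y i)} \<union> {w\<in>hcube d. a \<le> (\<Sum>i<d. w i * (- y i))}"
    by (auto simp: sum_negf abs_if split: if_splits)
  hence "card {w\<in>hcube d. a \<le> \<bar>\<Sum>i<d. w i * y i\<bar>} \<le> card ({w\<in>hcube d. a \<le> (\<Sum>i<d. w i * y i)} \<union> {w\<in>hcube d. a \<le> (\<Sum>i<d. w i * (- y i))})"
    by (intro card_mono) (use fin in auto)
  also have "\<dots> \<le> card {w\<in>hcube d. a \<le> (\<Sum>i<d. w i * y i)} + card {w\<in>hcube d. a \<le> (\<Sum>i<d. w i * (- y i))}"
    by (rule card_Un_le)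
  finally have "real (card {w\<in>hcube d. a \<le> \<bar>\<Sum>i<d. w i * y i\<bar>}) \<le> real (card {w\<in>hcube d. a \<le> (\<Sum>i<d. w i * y i)}) + real (card {w\<in>hcube d. a \<le> (\<Sum>i<d. w i * (- y i))})"
    by linarith
  moreover have "real (card {w\<in>hcube d. a \<le> (\<Sum>i<d. w i * y i)}) \<le> 2^d * exp (-(a^2)/2)"
    by (rule hcube_tail1[OF assms])
  moreover have "real (card {w\<in>hcube d. a \<le> (\<Sum>i<d. w i * (- y i))}) \<le> 2^d * exp (-(a^2)/2)"
    by (rule hcube_tail1) (use assms in simp_all)
  ultimately show ?thesis by linarith
qed


fun gr :: "('a \<Rightarrow> bool) \<Rightarrow> ('a \<Rightarrow> 'b) \<Rightarrow> ('b \<Rightarrow> 'b set \<Rightarrow> bool) \<Rightarrow> 'a list \<Rightarrow> 'b set \<Rightarrow> 'b set" where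
  "gr ok f far [] Y = Y"
| "gr ok f far (v#vs) Y = gr ok f far vs (if ok v \<and> far (f v) Y then insert (f v) Y else Y)"

lemma gr_inv:
  assumes "\<And>Y v. Inv Y \<Longrightarrow> ok v \<Longrightarrow> far (f v) Y \<Longrightarrow> Inv (insert (f v) Y)"
  shows "Inv Y \<Longrightarrow> Inv (gr ok f far vs Y)"
  by (induction vs arbitrary: Y) (auto simp: assms)

lemma gr_sub: "gr ok f far vs Y \<subseteq> Y \<union> f ` {v\<in>set vs. ok v}"
proof (induction vs arbitrary: Y)
  case Nil then show ?case by simp
next
  case (Cons v vs)
  show ?case using Cons[of "if ok v \<and> far (f v) Y then insert (f v) Y else Y"] by (auto split: if_splits)
qed

lemma gr_card: "finite Y \<Longrightarrow> card Y \<le> card (gr ok f far vs Y)"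
proof (induction vs arbitrary: Y)
  case Nil then show ?case by simp
next
  case (Cons v vs)
  let ?Y = "if ok v \<and> far (f v) Y then insert (f v) Y else Y"
  have "card Y \<le> card ?Y" using Cons.prems by (auto intro: card_mono)
  also have "\<dots> \<le> card (gr ok f far vs ?Y)" using Cons by auto
  finally show ?case by simp
qed

lemma lists_Suc_eq:
  "{vs. set vs \<subseteq> \<Omega> \<and> length vs = Suc N \<and> Q vs} =
   (\<lambda>(v,vs). v#vs) ` (SIGMA v:\<Omega>. {vs. set vs \<subseteq> \<Omega> \<and> length vs = N \<and> Q (v#vs)})"
proof (intro equalityI subsetI)
  fix xs assume "xs \<in> {vs. set vs \<subseteq> \<Omega> \<and> length vs = Suc N \<and> Q vs}"
  then obtain v vs where "xs = v # vs" "v \<in> \<Omega>" "set vs \<subseteq> \<Omega>" "length vs = N" "Q (v#vs)"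
    by (cases xs) auto
  then show "xs \<in> (\<lambda>(v,vs). v#vs) ` (SIGMA v:\<Omega>. {vs. set vs \<subseteq> \<Omega> \<and> length vs = N \<and> Q (v#vs)})"
    by force
qed auto

lemma card_lists_Suc:
  assumes "finite \<Omega>"
  shows "card {vs. set vs \<subseteq> \<Omega> \<and> length vs = Suc N \<and> Q vs} =
    (\<Sum>v\<in>\<Omega>. card {vs. set vs \<subseteq> \<Omega> \<and> length vs = N \<and> Q (v#vs)})"
proof -
  have inj: "inj_on (\<lambda>(v,vs). v#vs) X" for X :: "('a \<times> 'a list) set"
    by (rule inj_onI) auto
  have fin: "finite {vs. set vs \<subseteq> \<Omega> \<and> length vs = N \<and> Q (v#vs)}" for v
    by (rule finite_subset[OF _ finite_lists_length_eq[OF assms, of N]]) auto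
  show ?thesis unfolding lists_Suc_eq
    by (simp add: card_image[OF inj] card_SigmaI[OF assms] fin)
qed

lemma gr_count:
  fixes \<Omega> :: "'a set" and \<alpha> :: real
  assumes fin: "finite \<Omega>" and \<alpha>: "0 \<le> \<alpha>" "\<alpha> \<le> 1"
  and good: "\<And>Y. Inv Y \<Longrightarrow> card Y < P \<Longrightarrow> \<alpha> * card \<Omega> \<le> card {v\<in>\<Omega>. ok v \<and> far (f v) Y}"
  and pres: "\<And>Y v. Inv Y \<Longrightarrow> ok v \<Longrightarrow> far (f v) Y \<Longrightarrow> Inv (insert (f v) Y)"
  and notin: "\<And>Y v. Inv Y \<Longrightarrow> ok v \<Longrightarrow> far (f v) Y \<Longrightarrow> f v \<notin> Y"
  and invfin: "\<And>Y. Inv Y \<Longrightarrow> finite Y"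
  shows "Inv Y \<Longrightarrow> real (card {vs. set vs \<subseteq> \<Omega> \<and> length vs = N \<and> card (gr ok f far vs Y) < P})
           \<le> real (card \<Omega>) ^ N * 2 ^ (P - card Y) * (1 - \<alpha>/2) ^ N"
proof (induction N arbitrary: Y)
  case 0
  have "{vs. set vs \<subseteq> \<Omega> \<and> length vs = 0 \<and> card (gr ok f far vs Y) < P} \<subseteq> {[]}" by auto
  hence "card {vs. set vs \<subseteq> \<Omega> \<and> length vs = 0 \<and> card (gr ok f far vs Y) < P} \<le> 1"
  proof -
    have "card {vs. set vs \<subseteq> \<Omega> \<and> length vs = 0 \<and> card (gr ok f far vs Y) < P} \<le> card {[]::'a list}"
      by (rule card_mono) auto
    thus ?thesis by simp
  qed
  hence c1: "real (card {vs. set vs \<subseteq> \<Omega> \<and> length vs = 0 \<and> card (gr ok f far vs Y) < P}) \<le> 1" by simp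
  have h: "(1::real) \<le> 2 ^ (P - card Y)" by simp
  have e: "real (card \<Omega>) ^ 0 * 2 ^ (P - card Y) * (1 - \<alpha>/2) ^ 0 = (2::real) ^ (P - card Y)" by simp
  show ?case using c1 h unfolding e by linarith
next
  case (Suc N)
  let ?m = "real (card \<Omega>)" and ?r = "1 - \<alpha>/2"
  let ?j = "card Y"
  show ?case
  proof (cases "?j < P")
    case False
    have E: "{vs. set vs \<subseteq> \<Omega> \<and> length vs = Suc N \<and> card (gr ok f far vs Y) < P} = {}"
    proof -
      have "P \<le> card (gr ok f far vs Y)" for vs
        using gr_card[OF invfin[OF Suc.prems], of ok f far vs] False by linarith
      thus ?thesis by (auto simp: not_less)
    qed
    show ?thesis unfolding E using \<alpha> by simp
  next
    case True
    define G where "G = {v\<in>\<Omega>. ok v \<and> far (f v) Y}"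
    define B0 where "B0 = ?m ^ N * 2 ^ (P - ?j) * ?r ^ N"
    have B0: "B0 \<ge> 0" unfolding B0_def using \<alpha> by simp
    define St where "St v = (if ok v \<and> far (f v) Y then insert (f v) Y else Y)" for v
    have "real (card {vs. set vs \<subseteq> \<Omega> \<and> length vs = Suc N \<and> card (gr ok f far vs Y) < P})
        = (\<Sum>v\<in>\<Omega>. real (card {vs. set vs \<subseteq> \<Omega> \<and> length vs = N \<and> card (gr ok f far vs (St v)) < P}))"
      by (simp add: card_lists_Suc[OF fin] St_def)
    also have "\<dots> \<le> (\<Sum>v\<in>\<Omega>. B0 - (if v \<in> G then B0/2 else 0))"
    proof (rule sum_mono)
      fix v assume v: "v \<in> \<Omega>"
      show "real (card {vs. set vs \<subseteq> \<Omega> \<and> length vs = N \<and> card (gr ok f far vs (St v)) < P}) \<le> B0 - (if v \<in> G then B0/2 else 0)"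
      proof (cases "v \<in> G")
        case True
        hence okf: "ok v" "far (f v) Y" by (auto simp: G_def)
        have St: "St v = insert (f v) Y" using okf by (simp add: St_def)
        have cSt: "card (St v) = Suc ?j" using St notin[OF Suc.prems okf] invfin[OF Suc.prems] by simp
        have "P - card (St v) = P - ?j - 1" using cSt True by simp
        moreover have "(2::real) ^ (P - ?j) = 2 * 2 ^ (P - ?j - 1)" using \<open>?j < P\<close>
          by (metis Suc_diff_Suc diff_Suc_1 power_Suc)
        moreover have "real (card {vs. set vs \<subseteq> \<Omega> \<and> length vs = N \<and> card (gr ok f far vs (St v)) < P}) \<le> ?m ^ N * 2 ^ (P - card (St v)) * ?r ^ N"
          using Suc.IH[of "St v"] pres[OF Suc.prems okf] St by simp
        ultimately show ?thesis using True by (simp add: B0_def)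
      next
        case False
        hence "St v = Y" by (auto simp: St_def G_def v)
        then show ?thesis using Suc.IH[OF Suc.prems] False by (simp add: B0_def)
      qed
    qed
    also have "\<dots> = ?m * B0 - real (card G) * (B0/2)"
    proof -
      have "G \<subseteq> \<Omega>" by (auto simp: G_def)
      hence "(\<Sum>v\<in>\<Omega>. (if v \<in> G then B0/2 else 0)) = real (card G) * (B0/2)"
        using fin by (simp add: sum.If_cases Int_absorb1)
      thus ?thesis by (simp add: sum_subtractf)
    qed
    also have "\<dots> \<le> ?m * B0 - \<alpha> * ?m * (B0/2)"
      using good[OF Suc.prems True] B0 unfolding G_def by (intro diff_left_mono mult_right_mono) auto
    also have "\<dots> = ?m ^ Suc N * 2 ^ (P - ?j) * ?r ^ Suc N"
      by (simp add: B0_def algebra_simps)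
    finally show ?thesis .
  qed
qed


lemma ln2_ge_half: "1/2 \<le> ln (2::real)"
proof -
  have "exp (1/2::real) ^ 2 = exp 1" by (simp add: exp_double[symmetric])
  also have "\<dots> \<le> 3" by (rule exp_le)
  finally have "exp (1/2::real) ^ 2 \<le> 2 ^ 2" by simp
  hence "exp (1/2::real) \<le> 2" by (rule power2_le_imp_le) simp
  thus ?thesis by (subst ln_ge_iff) auto
qed

lemma ln2_le_1: "ln (2::real) \<le> 1"
  using ln_le_minus_one[of 2] by simp

lemma s_ge_sqrt:
  assumes "0 < \<delta>" "\<delta> < 1" "1 \<le> ln (real d)"
  shows "sqrt (real d) \<le> s_par \<delta> d"
proof -
  have d1: "1 \<le> real d"
  proof (rule ccontr)
    assume "\<not> 1 \<le> real d"
    hence "real d < 1" by simp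
    hence "ln (real d) < 1" using ln_less_zero_iff[of "real d"] by (cases "d = 0") auto
    thus False using assms by simp
  qed
  have "sqrt (real d) = real d powr (1/2)" using powr_half_sqrt[of "real d"] by simp
  also have "\<dots> \<le> real d powr (1 - \<delta>/2)" by (rule powr_mono) (use assms d1 in auto)
  finally have a: "sqrt (real d) \<le> real d powr (1 - \<delta>/2)" .
  have b: "1 \<le> (ln (real d))^2" using assms(3) by (simp add: one_le_power)
  have "real d powr (1 - \<delta>/2) \<le> real d powr (1 - \<delta>/2) * (ln (real d))^2"
    using b by (simp add: mult_le_cancel_left1)
  thus ?thesis using a unfolding s_par_def by linarith
qed

lemma exp_sq_bound:
  fixes x :: real
  assumes "x \<ge> 0"
  shows "x^2 / 4 \<le> exp x"
proof -
  have "(1 + x/2)^2 \<le> exp (x/2)^2" using assms by (intro power_mono) auto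
  also have "exp (x/2)^2 = exp x" by (simp add: exp_double[symmetric])
  finally have "(1 + x/2)^2 \<le> exp x" .
  moreover have "x^2/4 \<le> (1 + x/2)^2" using assms by (simp add: power2_eq_square field_simps)
  ultimately show ?thesis by linarith
qed

lemma numeric_eps: "2 * (9/10::real)^20 \<le> 1/4"
  by (simp add: power_divide)

lemma eps_bound:
  assumes "P \<ge> 1"
  shows "(2::real)^P * (9/10)^(20*P) \<le> 1/4"
proof -
  have "(2::real)^P * (9/10)^(20*P) = (2 * (9/10)^20)^P"
    by (simp add: power_mult power_mult_distrib)
  also have "\<dots> \<le> (2 * (9/10::real)^20)^1"
    by (rule power_decreasing) (use assms numeric_eps in auto)
  also have "\<dots> \<le> 1/4" using numeric_eps by simp
  finally show ?thesis .
qed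


lemma CS_sum:
  fixes a b :: "nat \<Rightarrow> real"
  shows "(\<Sum>i\<in>I. a i * b i)^2 \<le> (\<Sum>i\<in>I. (a i)^2) * (\<Sum>i\<in>I. (b i)^2)"
proof (cases "(\<Sum>i\<in>I. (b i)^2) > 0")
  case False
  hence z: "(\<Sum>i\<in>I. (b i)^2) = 0" by (meson not_less order_antisym sum_nonneg zero_le_power2)
  show ?thesis
  proof (cases "finite I")
    case True
    hence "\<forall>i\<in>I. (b i)^2 = 0" using z by (simp add: sum_nonneg_eq_0_iff)
    hence "\<forall>i\<in>I. b i = 0" by simp
    thus ?thesis by simp
  next
    case False thus ?thesis by simp
  qed
next
  case True
  define B where "B = (\<Sum>i\<in>I. (b i)^2)"
  define C where "C = (\<Sum>i\<in>I. a i * b i)"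
  define r where "r = C / B"
  have "0 \<le> (\<Sum>i\<in>I. (a i - r * b i)^2)" by (simp add: sum_nonneg)
  also have "\<dots> = (\<Sum>i\<in>I. (a i)^2) - 2 * r * C + r^2 * B"
    by (simp add: B_def C_def algebra_simps power2_eq_square sum_distrib_left sum_subtractf sum.distrib)
  also have "\<dots> = (\<Sum>i\<in>I. (a i)^2) - C^2 / B"
    using True by (simp add: r_def B_def power2_eq_square field_simps)
  finally have "C^2 / B \<le> (\<Sum>i\<in>I. (a i)^2)" by simp
  thus ?thesis using True by (simp add: C_def B_def field_simps)
qed


lemma ip_abs_le: "\<bar>ip d u z\<bar> \<le> enorm d u * enorm d z"
proof -
  have "(ip d u z)^2 \<le> ip d u u * ip d z z"
    unfolding ip_def using CS_sum[of u z "{..<d}"] by (simp add: power2_eq_square)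
  hence "sqrt ((ip d u z)^2) \<le> sqrt (ip d u u * ip d z z)" by (rule real_sqrt_le_mono)
  thus ?thesis by (simp add: enorm_def real_sqrt_mult)
qed

lemma ip_diff: "ip d v (\<lambda>i. x i - y i) = ip d v x - ip d v y"
  by (simp add: ip_def algebra_simps sum_subtractf)

lemma enorm_sym: "enorm d (\<lambda>i. x i - y i) = enorm d (\<lambda>i. y i - x i)"
  by (simp add: enorm_def ip_def algebra_simps)

lemma enorm_zero: "enorm d (\<lambda>i. x i - x i) = 0"
  by (simp add: enorm_def ip_def)

lemma unit_sq: "y \<in> unit_sphere d \<Longrightarrow> (\<Sum>i<d. (y i)^2) = 1"
proof -
  assume "y \<in> unit_sphere d"
  hence "sqrt (ip d y y) = 1" by (simp add: unit_sphere_def enorm_def)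
  hence "ip d y y = 1" by simp
  thus ?thesis by (simp add: ip_def power2_eq_square)
qed

definition sc :: "nat \<Rightarrow> vec \<Rightarrow> vec" where "sc d w = (\<lambda>i. w i / sqrt (real d))"

lemma scube_sc: "scube d = sc d ` hcube d" by (simp add: scube_def sc_def)

lemma sc_inj: "d > 0 \<Longrightarrow> inj_on (sc d) X"
proof (rule inj_onI)
  fix x y assume d: "d > 0" and e: "sc d x = sc d y"
  show "x = y"
  proof
    fix i
    have "x i / sqrt (real d) = y i / sqrt (real d)" using fun_cong[OF e, of i] by (simp add: sc_def)
    thus "x i = y i" using d by simp
  qed
qed

lemma scube_fin_card: "d > 0 \<Longrightarrow> finite (scube d) \<and> card (scube d) = 2^d"
proof -
  assume d: "d > 0"
  have c: "card (scube d) = card (hcube d)" unfolding scube_sc by (rule card_image[OF sc_inj[OF d]])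
  have f: "finite (scube d)" unfolding scube_sc using conjunct1[OF hcube_fin_card[of d]] by (rule finite_imageI)
  have h: "card (hcube d) = 2^d" using conjunct2[OF hcube_fin_card[of d]] .
  show ?thesis using f trans[OF c h] by (rule conjI)
qed

lemma scube_enorm: assumes "d > 0" "v \<in> scube d" shows "enorm d v = 1"
proof -
  have "v \<in> sc d ` hcube d" using assms(2) unfolding scube_sc .
  then obtain w where w: "w \<in> hcube d" "v = sc d w" by blast
  have "ip d v v = (\<Sum>i<d. 1 / real d)"
    unfolding ip_def w(2) sc_def
  proof (rule sum.cong[OF refl])
    fix i assume "i \<in> {..<d}"
    hence "w i = 1 \<or> w i = -1" using w(1) unfolding hcube_def by blast
    hence "w i * w i = 1" by auto
    thus "w i / sqrt (real d) * (w i / sqrt (real d)) = 1 / real d"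
      using assms(1) by (simp add: field_simps)
  qed
  also have "\<dots> = 1" using assms(1) by simp
  finally show ?thesis by (simp add: enorm_def)
qed

lemma scube_tail:
  assumes "d > 0" "(\<Sum>i<d. (y i)^2) \<le> 1" "t \<ge> 0"
  shows "real (card {v\<in>scube d. t \<le> \<bar>ip d v y\<bar>}) \<le> 2 * 2^d * exp (- (real d * t^2) / 2)"
proof -
  have fin: "finite (hcube d)" using hcube_fin_card by blast
  have sd: "sqrt (real d) > 0" using assms by simp
  have "{v\<in>scube d. t \<le> \<bar>ip d v y\<bar>} = sc d ` {w\<in>hcube d. t \<le> \<bar>ip d (sc d w) y\<bar>}"
    by (auto simp: scube_sc)
  hence "card {v\<in>scube d. t \<le> \<bar>ip d v y\<bar>} \<le> card {w\<in>hcube d. t \<le> \<bar>ip d (sc d w) y\<bar>}"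
    by (simp add: card_image_le fin)
  also have "{w\<in>hcube d. t \<le> \<bar>ip d (sc d w) y\<bar>} = {w\<in>hcube d. t * sqrt (real d) \<le> \<bar>\<Sum>i<d. w i * y i\<bar>}"
  proof -
    have "ip d (sc d w) y = (\<Sum>i<d. w i * y i) / sqrt (real d)" for w
      by (simp add: ip_def sc_def sum_divide_distrib)
    hence "\<bar>\<Sum>i<d. w i * y i\<bar> = sqrt (real d) * \<bar>ip d (sc d w) y\<bar>" for w
      using sd by (simp add: abs_mult)
    hence "(t * sqrt (real d) \<le> \<bar>\<Sum>i<d. w i * y i\<bar>) = (t \<le> \<bar>ip d (sc d w) y\<bar>)" for w
      using sd by (simp add: mult.commute)
    thus ?thesis by auto
  qed
  finally have "real (card {v\<in>scube d. t \<le> \<bar>ip d v y\<bar>}) \<le> card {w\<in>hcube d. t * sqrt (real d) \<le> \<bar>\<Sum>i<d. w i * y i\<bar>}"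
    by simp
  also have "\<dots> \<le> 2 * 2^d * exp (-((t * sqrt (real d))^2)/2)"
    by (rule hcube_tail) (use assms in auto)
  also have "(t * sqrt (real d))^2 = real d * t^2" by (simp add: power_mult_distrib)
  finally show ?thesis by simp
qed

lemma mats_eq: "mats d = (\<lambda>F j. if j < d div 2 then F j else (\<lambda>_. 0)) ` (PiE {..<d div 2} (\<lambda>_. hcube d))"
proof (intro equalityI subsetI)
  fix A assume A: "A \<in> mats d"
  have R: "restrict A {..<d div 2} \<in> PiE {..<d div 2} (\<lambda>_. hcube d)" using A by (auto simp: mats_def restrict_PiE_iff)
  have E: "A = (\<lambda>j. if j < d div 2 then restrict A {..<d div 2} j else (\<lambda>_. 0))"
    using A by (auto simp: mats_def fun_eq_iff)
  show "A \<in> (\<lambda>F j. if j < d div 2 then F j else (\<lambda>_. 0)) ` (PiE {..<d div 2} (\<lambda>_. hcube d))"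
    by (rule image_eqI[where f="\<lambda>F j. if j < d div 2 then F j else (\<lambda>_. 0)", OF E R])
next
  fix A assume "A \<in> (\<lambda>F j. if j < d div 2 then F j else (\<lambda>_. 0)) ` (PiE {..<d div 2} (\<lambda>_. hcube d))"
  then obtain F where F: "F \<in> PiE {..<d div 2} (\<lambda>_. hcube d)" and A: "A = (\<lambda>j. if j < d div 2 then F j else (\<lambda>_. 0))"
    by (rule imageE)
  have "\<forall>j<d div 2. F j \<in> hcube d" using F by (auto simp: PiE_iff)
  thus "A \<in> mats d" unfolding A mats_def by simp
qed

lemma mats_fin_card: "finite (mats d) \<and> card (mats d) = 2^(d * (d div 2))"
proof -
  have inj: "inj_on (\<lambda>F j. if j < d div 2 then F j else (\<lambda>_. 0)) (PiE {..<d div 2} (\<lambda>_. hcube d))"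
  proof (rule inj_onI)
    fix F G assume F: "F \<in> PiE {..<d div 2} (\<lambda>_. hcube d)" and G: "G \<in> PiE {..<d div 2} (\<lambda>_. hcube d)"
      and e: "(\<lambda>j. if j < d div 2 then F j else (\<lambda>_. 0)) = (\<lambda>j. if j < d div 2 then G j else (\<lambda>_. 0))"
    show "F = G"
    proof (rule PiE_ext[OF F G])
      fix i assume "i \<in> {..<d div 2}"
      thus "F i = G i" using fun_cong[OF e, of i] by simp
    qed
  qed
  have fin: "finite (PiE {..<d div 2} (\<lambda>_. hcube d))"
    using hcube_fin_card by (intro finite_PiE) auto
  have "card (PiE {..<d div 2} (\<lambda>_. hcube d)) = (2^d)^(d div 2)"
    using hcube_fin_card by (simp add: card_PiE)
  thus ?thesis unfolding mats_eq using fin inj by (simp add: card_image power_mult)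
qed

lemma responses_fin: "finite R \<Longrightarrow> finite (responses n R)"
  by (rule finite_subset[OF _ finite_lists_length_eq[of "insert None (Some ` R)" n]])
     (auto simp: responses_def)

lemma orth_fin: "finite V \<Longrightarrow> finite (orth_entries d n eps X M B V)"
proof -
  assume V: "finite V"
  have "table d n X M B V = (\<lambda>(v,R). X M v R) ` (V \<times> responses n (rows d B))"
    by (auto simp: table_def)
  moreover have "finite (rows d B)" by (simp add: rows_def)
  ultimately have "finite (table d n X M B V)" using V responses_fin by simp
  thus ?thesis unfolding orth_entries_def by simp
qed

lemma packing_ge:
  assumes "finite S" "Y \<subseteq> S" "separated d a Y"
  shows "card Y \<le> packing_size d S a"
proof -
  have "{card Y | Y. Y \<subseteq> S \<and> finite Y \<and> separated d a Y} \<subseteq> card ` Pow S" by auto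
  hence fin: "finite {card Y | Y. Y \<subseteq> S \<and> finite Y \<and> separated d a Y}"
    using assms(1) by (meson finite_Pow_iff finite_imageI finite_subset)
  have "finite Y" using assms finite_subset by blast
  hence "card Y \<in> {card Y | Y. Y \<subseteq> S \<and> finite Y \<and> separated d a Y}" using assms by blast
  thus ?thesis unfolding packing_size_def using fin by (rule Max_ge[rotated])
qed

lemma exists_below_avg:
  fixes g :: "'a \<Rightarrow> real"
  assumes "finite L" "L \<noteq> {}" "(\<Sum>x\<in>L. g x) \<le> real (card L) * c"
  shows "\<exists>x\<in>L. g x \<le> c"
proof (rule ccontr)
  assume "\<not> ?thesis"
  hence "\<forall>x\<in>L. c < g x" by auto
  hence "(\<Sum>x\<in>L. c) < (\<Sum>x\<in>L. g x)" using assms by (intro sum_strict_mono) auto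
  thus False using assms by simp
qed

lemma card_filter_sum: "finite B \<Longrightarrow> real (card {x\<in>B. P x}) = (\<Sum>x\<in>B. if P x then 1 else 0)"
proof -
  assume "finite B"
  hence "(\<Sum>x\<in>B. if P x then 1 else 0) = real (card (B \<inter> {x. P x}))" by (simp add: sum.If_cases)
  also have "B \<inter> {x. P x} = {x\<in>B. P x}" by auto
  finally show ?thesis by simp
qed

lemma double_count:
  assumes "finite As" "finite L"
  shows "(\<Sum>A\<in>As. real (card {x\<in>L. F A x})) = (\<Sum>x\<in>L. real (card {A\<in>As. F A x}))"
  using assms by (simp add: card_filter_sum sum.swap[of _ As L])


lemma core:
  fixes c1 \<delta> :: real and d kd n :: nat
  assumes c1: "0 < c1" "c1 \<le> 1/10" and \<delta>: "0 < \<delta>" "\<delta> < 1"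
  and d: "even d" "16 \<le> ln (real d)" "2/c1 \<le> ln (real d)" "2000 \<le> sqrt (real d)"
  and prot: "is_protocol d kd n Mf Rf X" "protocol_succeeds d (xi' d) (s_par \<delta> d) Mf Rf X"
  shows "\<exists>V. V \<subseteq> scube d \<and>
          real (card V) \<le> 16 * s_par \<delta> d * exp (c1 * s_par \<delta> d) \<and>
          16 * s_par \<delta> d * exp (c1 * s_par \<delta> d) \<le> 2 powr s_par \<delta> d \<and>
          real (card {A \<in> A_suc d (xi' d) (s_par \<delta> d) Mf Rf X.
                  real (packing_size d (orth_entries d n (xi' d) X (Mf A) A V) (real d powr (-8)))
                    \<ge> 2 powr (s_par \<delta> d / ln (real d))})
            \<ge> 1/8 * 2 powr (real d ^ 2 / 2)"
proof -
  define s where "s = s_par \<delta> d"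
  have lnd: "1 \<le> ln (real d)" using d(2) by linarith
  have s_sq: "sqrt (real d) \<le> s" unfolding s_def by (rule s_ge_sqrt[OF \<delta> lnd])
  have s2000: "2000 \<le> s" using s_sq d(4) by linarith
  have dsq: "real d = sqrt (real d) ^ 2" by simp
  have d4: "4000000 \<le> real d"
  proof -
    have "(2000::real)^2 \<le> sqrt (real d) ^ 2" using d(4) by (intro power_mono) auto
    thus ?thesis by simp
  qed
  have d0: "d > 0" using d4 by simp
  have dpos: "real d > 0" using d0 by simp
  have lnpos: "ln (real d) > 0" using lnd by linarith
  define m where "m = card (scube d)"
  have scfin: "finite (scube d)" and m: "m = 2^d" using scube_fin_card[OF d0] by (auto simp: m_def)
  have mpos: "real m > 0" using m by simp

  define E where "E = 2 powr (s / ln (real d))"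
  have Eexp: "E = exp (s / ln (real d) * ln 2)" by (simp add: E_def powr_def)
  have E1: "E \<le> exp (s/16)"
  proof -
    have nn: "0 \<le> s / ln (real d)" using s2000 lnpos by simp
    have "s / ln (real d) * ln 2 \<le> s / ln (real d)"
      using mult_left_mono[OF ln2_le_1 nn] by simp
    also have "\<dots> \<le> s / 16" using d(2) s2000 lnpos by (intro divide_left_mono) auto
    finally show ?thesis unfolding Eexp by simp
  qed
  have E2: "E \<le> exp (c1 * s / 2)"
  proof -
    have nn: "0 \<le> s / ln (real d)" using s2000 lnpos by simp
    have "s / ln (real d) * ln 2 \<le> s / ln (real d)"
      using mult_left_mono[OF ln2_le_1 nn] by simp
    also have "\<dots> \<le> s / (2/c1)" using d(3) s2000 c1 lnpos by (intro divide_left_mono) auto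
    also have "\<dots> = c1 * s / 2" using c1 by simp
    finally show ?thesis unfolding Eexp by simp
  qed
  have Epos: "E > 0" by (simp add: E_def)
  define P where "P = nat \<lceil>E\<rceil>"
  have P1: "E \<le> real P" unfolding P_def by linarith
  have P2: "real P \<le> E + 1" unfolding P_def using Epos by linarith
  have Pge1: "P \<ge> 1" using P1 Epos by linarith
  define N where "N = 20 * P"

  define \<tau> where "\<tau> = sqrt (s / real d) - real d powr (-8)"
  have r8: "real d powr (-8) = 1 / real d ^ 8"
    using dpos by (simp add: powr_minus divide_inverse)
  have r8pos: "real d powr (-8) > 0" using dpos by simp
  have sq1: "1 / real d \<le> sqrt (s / real d)"
  proof -
    have sd1: "1 * 1 \<le> s * real d" using s2000 d4 by (intro mult_mono) auto
    have "1 / real d ^ 2 \<le> s / real d"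
      using sd1 dpos by (simp add: field_simps power2_eq_square)
    hence "sqrt (1 / real d ^ 2) \<le> sqrt (s / real d)" by (rule real_sqrt_le_mono)
    thus ?thesis using dpos by (simp add: real_sqrt_divide)
  qed
  have r8le: "real d powr (-8) \<le> (1 / real d) / 2"
  proof -
    have "2 * real d \<le> real d ^ 8"
    proof -
      have "2 * real d \<le> real d * real d" using d4 by (intro mult_right_mono) auto
      also have "\<dots> = real d ^ 2" by (simp add: power2_eq_square)
      also have "\<dots> \<le> real d ^ 8" using d4 by (intro power_increasing) auto
      finally show ?thesis .
    qed
    thus ?thesis unfolding r8 using dpos by (simp add: field_simps)
  qed
  have tau_ge: "sqrt (s / real d) / 2 \<le> \<tau>" 
  proof -
    have gen: "\<And>a b c::real. a \<le> b \<Longrightarrow> c \<le> a/2 \<Longrightarrow> b/2 \<le> b - c" by linarith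
    show ?thesis unfolding \<tau>_def by (rule gen[OF sq1 r8le])
  qed
  have "0 \<le> sqrt (s / real d) / 2" using s2000 dpos by simp
  hence tau0: "0 \<le> \<tau>" using tau_ge by linarith
  have dtau: "s / 4 \<le> real d * \<tau>^2"
  proof -
    have "(sqrt (s / real d) / 2)^2 \<le> \<tau>^2"
      using tau_ge s2000 dpos by (intro power_mono) auto
    hence "s / real d / 4 \<le> \<tau>^2" using s2000 dpos by (simp add: power_divide)
    thus ?thesis using dpos by (simp add: field_simps)
  qed
  have tail: "real (card {v\<in>scube d. \<tau> \<le> \<bar>ip d v y\<bar>}) \<le> 2 * 2^d * exp (- s / 8)"
    if y: "y \<in> unit_sphere d" for y
  proof -
    have "real (card {v\<in>scube d. \<tau> \<le> \<bar>ip d v y\<bar>}) \<le> 2 * 2^d * exp (- (real d * \<tau>^2) / 2)"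
      by (rule scube_tail[OF d0 _ tau0]) (simp add: unit_sq[OF y])
    also have "\<dots> \<le> 2 * 2^d * exp (- s / 8)" using dtau by simp
    finally show ?thesis .
  qed
  have Pexp: "real P * (2 * exp (- s / 8)) \<le> 1 / 20"
  proof -
    have "1 \<le> exp (s/16)" using s2000 by simp
    hence "real P \<le> 2 * exp (s/16)" using P2 E1 by linarith
    hence "real P * (2 * exp (- s / 8)) \<le> 2 * exp (s/16) * (2 * exp (- s / 8))"
      by (intro mult_right_mono) auto
    also have "\<dots> = 4 * exp (- (s/16))"
      by (simp add: exp_add[symmetric] mult.assoc)
    also have "\<dots> \<le> 1/20"
    proof -
      have "80 \<le> exp (s/16)" using exp_ge_add_one_self[of "s/16"] s2000 by linarith
      hence "exp (- (s/16)) \<le> 1/80" by (simp add: exp_minus field_simps)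
      thus ?thesis by simp
    qed
    finally show ?thesis .
  qed

  have prot_resp: "Rf A v \<in> responses n (rows d A)" if "A \<in> mats d" "v \<in> scube d" for A v
    using prot(1) that unfolding is_protocol_def by blast
  have rows_h: "rows d A \<subseteq> hcube d" if "A \<in> mats d" for A
    using that by (auto simp: rows_def mats_def)
  have resp_mono: "responses n R1 \<subseteq> responses n R2" if "R1 \<subseteq> R2" for R1 R2
    using that by (auto simp: responses_def)
  have prot_unit: "X (Mf A) v (Rf A v) \<in> unit_sphere d" if "A \<in> mats d" "v \<in> scube d" for A v
  proof -
    have "length (Mf A) = kd * d" using prot(1) that unfolding is_protocol_def by blast
    moreover have "Rf A v \<in> responses n (hcube d)"
      using prot_resp[OF that] resp_mono[OF rows_h[OF that(1)]] by blast
    ultimately show ?thesis using prot(1) that(2) unfolding is_protocol_def by blast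
  qed

  define As where "As = A_suc d (xi' d) s Mf Rf X"
  have As_sub: "As \<subseteq> mats d" by (auto simp: As_def A_suc_def)
  have matsfin: "finite (mats d)" using mats_fin_card by blast
  have Asfin: "finite As" using As_sub matsfin finite_subset by blast

  define ok where "ok A v = (v \<in> scube d \<and> succeeds d (xi' d) s Mf Rf X A v)" for A v
  define f where "f A v = X (Mf A) v (Rf A v)" for A v
  define r where "r = real d powr (-8)"
  define far where "far x Y = (\<forall>y\<in>Y. r \<le> enorm d (\<lambda>i. x i - y i))" for x :: vec and Y
  define Inv where "Inv Y = (finite Y \<and> Y \<subseteq> unit_sphere d \<and> separated d r Y)" for Y
  have rpos: "r > 0" using r8pos by (simp add: r_def)

  have pres: "Inv (insert (f A v) Y)" if A: "A \<in> mats d" and "Inv Y" "ok A v" "far (f A v) Y" for A Y v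
  proof -
    have fu: "f A v \<in> unit_sphere d" using prot_unit[OF A] that(3) by (simp add: ok_def f_def)
    have "separated d r (insert (f A v) Y)"
      unfolding separated_def
    proof (intro ballI impI)
      fix x y assume x: "x \<in> insert (f A v) Y" and y: "y \<in> insert (f A v) Y" and xy: "x \<noteq> y"
      show "r \<le> enorm d (\<lambda>i. x i - y i)"
      proof (cases "x = f A v")
        case True
        then have "y \<in> Y" using y xy by auto
        then show ?thesis using that(4) True by (simp add: far_def)
      next
        case False
        then have xY: "x \<in> Y" using x by auto
        show ?thesis
        proof (cases "y = f A v")
          case True
          then have "r \<le> enorm d (\<lambda>i. y i - x i)" using that(4) xY by (simp add: far_def)
          then show ?thesis using enorm_sym[of d y x] by simp
        next
          case False
          then have "y \<in> Y" using y by auto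
          then show ?thesis using xY xy that(2) by (simp add: Inv_def separated_def)
        qed
      qed
    qed
    thus ?thesis using that(2) fu by (simp add: Inv_def)
  qed
  have notin: "f A v \<notin> Y" if "far (f A v) Y" for A v Y
  proof
    assume "f A v \<in> Y"
    hence "r \<le> enorm d (\<lambda>i. f A v i - f A v i)" using that unfolding far_def by blast
    thus False using rpos enorm_zero[of d "f A v"] by simp
  qed

  have good: "1/5 * real m \<le> real (card {v\<in>scube d. ok A v \<and> far (f A v) Y})"
    if A: "A \<in> As" and Y: "Inv Y" "card Y < P" for A Y
  proof -
    have Am: "A \<in> mats d" using A As_sub by blast
    define S where "S = {v\<in>scube d. ok A v}"
    define Near where "Near = {v\<in>scube d. ok A v \<and> \<not> far (f A v) Y}"
    have "S = {v\<in>scube d. succeeds d (xi' d) s Mf Rf X A v}" by (auto simp: S_def ok_def)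
    hence S4: "1/4 * real m \<le> real (card S)" using A by (simp add: As_def A_suc_def m_def)
    have sub: "Near \<subseteq> (\<Union>y\<in>Y. {v\<in>scube d. \<tau> \<le> \<bar>ip d v y\<bar>})"
    proof
      fix v assume "v \<in> Near"
      hence v: "v \<in> scube d" "ok A v" "\<not> far (f A v) Y" by (auto simp: Near_def)
      then obtain y where y: "y \<in> Y" "enorm d (\<lambda>i. f A v i - y i) < r"
        by (auto simp: far_def not_le)
      have succ: "sqrt (s / real d) \<le> \<bar>ip d v (f A v)\<bar>"
        using v(2) by (simp add: ok_def succeeds_def f_def Let_def)
      have "\<bar>ip d v (\<lambda>i. f A v i - y i)\<bar> \<le> enorm d v * enorm d (\<lambda>i. f A v i - y i)"
        by (rule ip_abs_le)
      also have "\<dots> = enorm d (\<lambda>i. f A v i - y i)" using scube_enorm[OF d0 v(1)] by simp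
      finally have "\<bar>ip d v (\<lambda>i. f A v i - y i)\<bar> < r" using y(2) by linarith
      hence "\<bar>ip d v (f A v) - ip d v y\<bar> < r" by (simp add: ip_diff)
      hence "\<tau> \<le> \<bar>ip d v y\<bar>" using succ unfolding \<tau>_def r_def[symmetric] by linarith
      thus "v \<in> (\<Union>y\<in>Y. {v\<in>scube d. \<tau> \<le> \<bar>ip d v y\<bar>})" using y(1) v(1) by blast
    qed
    have Yfin: "finite Y" and Yu: "Y \<subseteq> unit_sphere d" using Y by (auto simp: Inv_def)
    have "real (card Near) \<le> real (card (\<Union>y\<in>Y. {v\<in>scube d. \<tau> \<le> \<bar>ip d v y\<bar>}))"
    proof (intro of_nat_mono card_mono[OF _ sub])
      show "finite (\<Union>y\<in>Y. {v\<in>scube d. \<tau> \<le> \<bar>ip d v y\<bar>})"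
        by (rule finite_subset[OF _ scfin]) auto
    qed
    also have "\<dots> \<le> real (\<Sum>y\<in>Y. card {v\<in>scube d. \<tau> \<le> \<bar>ip d v y\<bar>})"
      by (intro of_nat_mono card_UN_le Yfin)
    also have "\<dots> = (\<Sum>y\<in>Y. real (card {v\<in>scube d. \<tau> \<le> \<bar>ip d v y\<bar>}))" by simp
    also have "\<dots> \<le> (\<Sum>y\<in>Y. 2 * 2^d * exp (- s / 8))"
      using Yu tail by (intro sum_mono) auto
    also have "\<dots> = real (card Y) * (2 * exp (- s / 8)) * 2^d" by simp
    also have "\<dots> \<le> real P * (2 * exp (- s / 8)) * 2^d"
      using Y(2) by (intro mult_right_mono) auto
    also have "\<dots> \<le> 1/20 * 2^d" using Pexp by (intro mult_right_mono) auto
    finally have NearB: "real (card Near) \<le> 1/20 * real m" using m by simp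
    have "S \<subseteq> {v\<in>scube d. ok A v \<and> far (f A v) Y} \<union> Near" by (auto simp: S_def Near_def)
    hence "card S \<le> card ({v\<in>scube d. ok A v \<and> far (f A v) Y} \<union> Near)"
      using scfin by (intro card_mono) (auto simp: Near_def)
    also have "\<dots> \<le> card {v\<in>scube d. ok A v \<and> far (f A v) Y} + card Near" by (rule card_Un_le)
    finally have "real (card S) \<le> real (card {v\<in>scube d. ok A v \<and> far (f A v) Y}) + real (card Near)"
      by linarith
    thus ?thesis using S4 NearB by linarith
  qed

  define L where "L = {vs. set vs \<subseteq> scube d \<and> length vs = N}"
  have Lfin: "finite L" unfolding L_def by (rule finite_lists_length_eq[OF scfin])
  have Lcard: "card L = m ^ N" unfolding L_def m_def by (rule card_lists_length_eq[OF scfin])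
  define fail where "fail A vs = (card (gr (ok A) (f A) far vs {}) < P)" for A vs
  have Inv0: "Inv {}" by (simp add: Inv_def separated_def)
  have gc: "real (card {vs\<in>L. fail A vs}) \<le> real m ^ N * (1/4)" if A: "A \<in> As" for A
  proof -
    have Am: "A \<in> mats d" using A As_sub by blast
    have "real (card {vs. set vs \<subseteq> scube d \<and> length vs = N \<and> card (gr (ok A) (f A) far vs {}) < P})
           \<le> real (card (scube d)) ^ N * 2 ^ (P - card ({}::vec set)) * (1 - (1/5)/2) ^ N"
    proof (rule gr_count[where Inv=Inv and ok="ok A" and f="f A" and far=far and P=P and \<alpha>="1/5"
            and \<Omega>="scube d" and N=N and Y="{}"])
      show "finite (scube d)" by (rule scfin)
      show "(0::real) \<le> 1/5" by simp
      show "(1/5::real) \<le> 1" by simp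
      show "1/5 * real (card (scube d)) \<le> real (card {v\<in>scube d. ok A v \<and> far (f A v) Y})"
        if "Inv Y" "card Y < P" for Y using good[OF A that] by (simp add: m_def)
      show "Inv (insert (f A v) Y)" if "Inv Y" "ok A v" "far (f A v) Y" for Y v
        by (rule pres[OF Am that])
      show "f A v \<notin> Y" if "Inv Y" "ok A v" "far (f A v) Y" for Y v
        by (rule notin[OF that(3)])
      show "finite Y" if "Inv Y" for Y using that by (simp add: Inv_def)
      show "Inv {}" by (rule Inv0)
    qed
    also have "\<dots> = real m ^ N * (2 ^ P * (9/10) ^ (20 * P))" by (simp add: m_def N_def)
    also have "\<dots> \<le> real m ^ N * (1/4)" using eps_bound[OF Pge1] by (intro mult_left_mono) auto
    finally show ?thesis
      by (simp add: L_def fail_def conj_assoc)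
  qed
  have "(\<Sum>vs\<in>L. real (card {A\<in>As. fail A vs})) = (\<Sum>A\<in>As. real (card {vs\<in>L. fail A vs}))"
    using double_count[OF Asfin Lfin, of "\<lambda>A vs. fail A vs"] by simp
  also have "\<dots> \<le> (\<Sum>A\<in>As. real m ^ N * (1/4))" using gc by (intro sum_mono) auto
  also have "\<dots> = real (card L) * (real (card As) / 4)" by (simp add: Lcard)
  finally have avg: "(\<Sum>vs\<in>L. real (card {A\<in>As. fail A vs})) \<le> real (card L) * (real (card As) / 4)" .
  have Lne: "L \<noteq> {}"
  proof -
    have "scube d \<noteq> {}" using m m_def by (metis card.empty power_not_zero zero_neq_numeral)
    then obtain v where "v \<in> scube d" by blast
    hence "replicate N v \<in> L" by (auto simp: L_def)
    thus ?thesis by blast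
  qed
  obtain vs where vsL: "vs \<in> L" and vsB: "real (card {A\<in>As. fail A vs}) \<le> real (card As) / 4"
    using exists_below_avg[OF Lfin Lne avg] by blast
  define V where "V = set vs"
  have Vsub: "V \<subseteq> scube d" using vsL by (simp add: L_def V_def)
  have Vcard: "card V \<le> N" using vsL card_length[of vs] by (simp add: L_def V_def)

  have VN: "real (card V) \<le> 16 * s * exp (c1 * s)"
  proof -
    have "real (card V) \<le> real N" using Vcard by simp
    also have "\<dots> = 20 * real P" by (simp add: N_def)
    also have "\<dots> \<le> 20 * (E + 1)" using P2 by simp
    also have "\<dots> \<le> 40 * exp (c1 * s / 2)"
    proof -
      have "1 \<le> exp (c1 * s / 2)" using c1 s2000 by simp
      have gen: "\<And>a x::real. a \<le> x \<Longrightarrow> 1 \<le> x \<Longrightarrow> 20 * (a + 1) \<le> 40 * x" by (simp add: distrib_left)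
      show ?thesis by (rule gen[OF E2 \<open>1 \<le> exp (c1 * s / 2)\<close>])
    qed
    also have "\<dots> \<le> 16 * s * exp (c1 * s)"
    proof -
      have "exp (c1 * s / 2) \<le> exp (c1 * s)" using c1 s2000 by simp
      moreover have "40 \<le> 16 * s" using s2000 by simp
      ultimately show ?thesis by (intro mult_mono) auto
    qed
    finally show ?thesis .
  qed
  have S2: "16 * s * exp (c1 * s) \<le> 2 powr s"
  proof -
    have "16 * s * exp (c1 * s) \<le> 16 * s * exp (s / 10)"
      using c1 s2000 by (intro mult_left_mono) (auto simp: mult_right_mono)
    also have "16 * s \<le> exp (2 * s / 5)"
    proof -
      have "(2*s/5)^2 / 4 \<le> exp (2 * s / 5)" by (rule exp_sq_bound) (use s2000 in simp)
      moreover have "16 * s \<le> (2*s/5)^2 / 4" using s2000 by (simp add: power2_eq_square field_simps)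
      ultimately show ?thesis by linarith
    qed
    hence "16 * s * exp (s / 10) \<le> exp (2 * s / 5) * exp (s / 10)" by (intro mult_right_mono) auto
    also have "\<dots> = exp (s / 2)" by (simp add: exp_add[symmetric])
    also have "\<dots> \<le> exp (s * ln 2)" using ln2_ge_half s2000 by (simp add: mult_left_mono)
    also have "\<dots> = 2 powr s" by (simp add: powr_def)
    finally show ?thesis .
  qed

  have mcard: "card (mats d) = 2^(d * (d div 2))" using mats_fin_card by blast
  have As3: "real (card (mats d)) / 3 \<le> real (card As)"
  proof -
    define g where "g A = real (card {v\<in>scube d. succeeds d (xi' d) s Mf Rf X A v})" for A
    have pairs: "{(A, v) \<in> mats d \<times> scube d. succeeds d (xi' d) s Mf Rf X A v}
        = Sigma (mats d) (\<lambda>A. {v\<in>scube d. succeeds d (xi' d) s Mf Rf X A v})" by auto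
    have "real (card {(A, v) \<in> mats d \<times> scube d. succeeds d (xi' d) s Mf Rf X A v}) = (\<Sum>A\<in>mats d. g A)"
      unfolding pairs g_def using matsfin scfin by (simp add: card_SigmaI)
    also have "\<dots> \<le> (\<Sum>A\<in>mats d. if A \<in> As then real m else real m / 4)"
    proof (rule sum_mono)
      fix A assume A: "A \<in> mats d"
      show "g A \<le> (if A \<in> As then real m else real m / 4)"
      proof (cases "A \<in> As")
        case True
        have "card {v\<in>scube d. succeeds d (xi' d) s Mf Rf X A v} \<le> m"
          unfolding m_def using scfin by (intro card_mono) auto
        thus ?thesis using True by (simp add: g_def)
      next
        case False
        hence "\<not> 1/4 * real m \<le> g A" using A by (simp add: As_def A_suc_def g_def m_def)
        thus ?thesis using False by simp
      qed
    qed
    also have "\<dots> = real (card As) * real m + real (card (mats d - As)) * (real m / 4)"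
    proof -
      have "(\<Sum>A\<in>mats d. if A \<in> As then real m else real m / 4)
          = (\<Sum>A\<in>mats d \<inter> As. real m) + (\<Sum>A\<in>mats d - As. real m / 4)"
        using matsfin by (simp add: sum.If_cases Diff_eq)
      also have "mats d \<inter> As = As" using As_sub by blast
      finally show ?thesis by simp
    qed
    also have "real (card (mats d - As)) = real (card (mats d)) - real (card As)"
      using As_sub Asfin by (simp add: card_Diff_subset of_nat_diff card_mono matsfin)
    finally have F1: "real (card {(A, v) \<in> mats d \<times> scube d. succeeds d (xi' d) s Mf Rf X A v})
       \<le> real (card As) * real m + (real (card (mats d)) - real (card As)) * (real m / 4)" .
    have F2: "1/2 * real (card (mats d \<times> scube d)) \<le> real (card {(A, v) \<in> mats d \<times> scube d. succeeds d (xi' d) s Mf Rf X A v})"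
      using prot(2) unfolding protocol_succeeds_def s_def by blast
    have F3: "real (card (mats d \<times> scube d)) = real (card (mats d)) * real m"
      by (simp add: card_cartesian_product m_def)
    have "1/2 * (real (card (mats d)) * real m) \<le> real (card As) * real m + (real (card (mats d)) - real (card As)) * (real m / 4)"
      using F1 F2 unfolding F3 by linarith
    hence "(real (card (mats d)) / 3) * real m \<le> real (card As) * real m"
      by (simp add: algebra_simps)
    thus ?thesis using mpos by simp
  qed

  define Nice where "Nice = {A \<in> As. real (packing_size d (orth_entries d n (xi' d) X (Mf A) A V) r) \<ge> E}"
  have Vfin: "finite V" by (simp add: V_def)
  have nice_of: "A \<in> Nice" if A: "A \<in> As" and nf: "\<not> fail A vs" for A
  proof -
    have Am: "A \<in> mats d" using A As_sub by blast
    define Y where "Y = gr (ok A) (f A) far vs {}"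
    have IY: "Inv Y" unfolding Y_def
      by (rule gr_inv[where Inv=Inv, OF _ Inv0]) (rule pres[OF Am])
    have cY: "P \<le> card Y" using nf by (simp add: fail_def Y_def)
    have Ysub: "Y \<subseteq> orth_entries d n (xi' d) X (Mf A) A V"
    proof
      fix x assume "x \<in> Y"
      hence "x \<in> f A ` {v\<in>set vs. ok A v}" using gr_sub[of "ok A" "f A" far vs "{}"] by (auto simp: Y_def)
      then obtain v where v: "v \<in> set vs" "ok A v" "x = f A v" by blast
      have vs: "v \<in> scube d" using v(2) by (simp add: ok_def)
      have "x \<in> table d n X (Mf A) A V"
        unfolding table_def using v prot_resp[OF Am vs] by (auto simp: f_def V_def)
      moreover have "orth_ok d (xi' d) A x" using v(2,3) by (simp add: ok_def succeeds_def f_def Let_def)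
      ultimately show "x \<in> orth_entries d n (xi' d) X (Mf A) A V" by (simp add: orth_entries_def)
    qed
    have "card Y \<le> packing_size d (orth_entries d n (xi' d) X (Mf A) A V) r"
      by (rule packing_ge[OF orth_fin[OF Vfin] Ysub]) (use IY in \<open>simp add: Inv_def\<close>)
    hence "E \<le> real (packing_size d (orth_entries d n (xi' d) X (Mf A) A V) r)" using P1 cY by linarith
    thus ?thesis using A by (simp add: Nice_def)
  qed
  have "As - {A\<in>As. fail A vs} \<subseteq> Nice" using nice_of by blast
  hence "card (As - {A\<in>As. fail A vs}) \<le> card Nice"
    by (intro card_mono) (auto simp: Nice_def intro: finite_subset[OF _ Asfin])
  moreover have "card (As - {A\<in>As. fail A vs}) = card As - card {A\<in>As. fail A vs}"
    using Asfin by (intro card_Diff_subset) auto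
  moreover have "card {A\<in>As. fail A vs} \<le> card As" using Asfin by (intro card_mono) auto
  ultimately have "real (card As) - real (card {A\<in>As. fail A vs}) \<le> real (card Nice)" by linarith
  hence NiceB: "3/4 * real (card As) \<le> real (card Nice)" using vsB by linarith
  have pw: "2 powr (real d ^ 2 / 2) = real (card (mats d))"
  proof -
    obtain k where k: "d = 2 * k" using d(1) by (rule evenE)
    have e: "real d ^ 2 / 2 = real (d * (d div 2))" using k by (simp add: power2_eq_square)
    have "2 powr (real d ^ 2 / 2) = 2 powr real (d * (d div 2))" unfolding e ..
    also have "\<dots> = 2 ^ (d * (d div 2))" by (rule powr_realpow) simp
    finally have "2 powr (real d ^ 2 / 2) = 2 ^ (d * (d div 2))" .
    thus ?thesis using mcard by simp
  qed
  have final: "1/8 * 2 powr (real d ^ 2 / 2) \<le> real (card Nice)"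
    unfolding pw using As3 NiceB by linarith
  show ?thesis
  proof (intro exI[of _ V] conjI)
    show "V \<subseteq> scube d" by (rule Vsub)
    show "real (card V) \<le> 16 * s_par \<delta> d * exp (c1 * s_par \<delta> d)" using VN by (simp add: s_def)
    show "16 * s_par \<delta> d * exp (c1 * s_par \<delta> d) \<le> 2 powr s_par \<delta> d" using S2 by (simp add: s_def)
    show "1/8 * 2 powr (real d ^ 2 / 2) \<le> real (card {A \<in> A_suc d (xi' d) (s_par \<delta> d) Mf Rf X.
                  real (packing_size d (orth_entries d n (xi' d) X (Mf A) A V) (real d powr (-8)))
                    \<ge> 2 powr (s_par \<delta> d / ln (real d))})"
      using final by (simp add: Nice_def As_def s_def r_def E_def)
  qed
qed

lemma main_D:
  fixes c1 \<delta> :: real and k :: "nat \<Rightarrow> nat"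
  assumes c1: "0 < c1" "c1 \<le> 1/10" and \<delta>: "0 < \<delta>" "\<delta> < 1"
  shows "\<exists>D. \<forall>d\<ge>D. even d \<longrightarrow>
    (\<forall>(n::nat) Mf Rf X.
       is_protocol d (k d) n Mf Rf X \<and> protocol_succeeds d (xi' d) (s_par \<delta> d) Mf Rf X \<longrightarrow>
       (\<exists>V. V \<subseteq> scube d \<and>
          real (card V) \<le> 16 * s_par \<delta> d * exp (c1 * s_par \<delta> d) \<and>
          16 * s_par \<delta> d * exp (c1 * s_par \<delta> d) \<le> 2 powr s_par \<delta> d \<and>
          real (card {A \<in> A_suc d (xi' d) (s_par \<delta> d) Mf Rf X.
                  real (packing_size d (orth_entries d n (xi' d) X (Mf A) A V) (real d powr (-8)))
                    \<ge> 2 powr (s_par \<delta> d / ln (real d))})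
            \<ge> 1/8 * 2 powr (real d ^ 2 / 2)))"
proof -
  define D where "D = nat \<lceil>exp (max 16 (2/c1))\<rceil> + 4000000"
  show ?thesis
  proof (intro exI[of _ D] allI impI)
    fix d n Mf Rf X assume dD: "D \<le> d" and ev: "even d"
      and pr: "is_protocol d (k d) n Mf Rf X \<and> protocol_succeeds d (xi' d) (s_par \<delta> d) Mf Rf X"
    have "exp (max 16 (2/c1)) \<le> real (nat \<lceil>exp (max 16 (2/c1))\<rceil>)" by linarith
    also have "\<dots> \<le> real d" using dD unfolding D_def by simp
    finally have e1: "exp (max 16 (2/c1)) \<le> real d" .
    have dpos: "0 < real d" using e1 by (smt (verit) exp_gt_zero)
    have lnd: "max 16 (2/c1) \<le> ln (real d)" using e1 dpos by (subst ln_ge_iff) auto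
    have d4: "4000000 \<le> real d" using dD unfolding D_def by simp
    have "sqrt (2000^2) \<le> sqrt (real d)" using d4 by (intro real_sqrt_le_mono) simp
    hence sq: "2000 \<le> sqrt (real d)" by simp
    show "(\<exists>V. V \<subseteq> scube d \<and>
          real (card V) \<le> 16 * s_par \<delta> d * exp (c1 * s_par \<delta> d) \<and>
          16 * s_par \<delta> d * exp (c1 * s_par \<delta> d) \<le> 2 powr s_par \<delta> d \<and>
          real (card {A \<in> A_suc d (xi' d) (s_par \<delta> d) Mf Rf X.
                  real (packing_size d (orth_entries d n (xi' d) X (Mf A) A V) (real d powr (-8)))
                    \<ge> 2 powr (s_par \<delta> d / ln (real d))})
            \<ge> 1/8 * 2 powr (real d ^ 2 / 2))"
      by (rule core[OF c1 \<delta> ev _ _ sq]) (use lnd pr in auto)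
  qed
qed

theorem lemma5p5:
  shows "\<exists>c0>0. \<forall>c1::real. 0 < c1 \<and> c1 \<le> c0 \<longrightarrow>
    (\<forall>\<delta>::real. 0 < \<delta> \<and> \<delta> < 1 \<longrightarrow>
    (\<forall>(k::nat \<Rightarrow> nat) (o1::nat \<Rightarrow> real).
       o1 \<longlonglongrightarrow> 0 \<and> (\<forall>d\<ge>2. real (k d) = real d powr (1 - \<delta> - o1 d)) \<longrightarrow>
    (\<exists>D. \<forall>d\<ge>D. even d \<longrightarrow>
    (\<forall>(n::nat) Mf Rf X.
       is_protocol d (k d) n Mf Rf X \<and> protocol_succeeds d (xi' d) (s_par \<delta> d) Mf Rf X \<longrightarrow>
       (\<exists>V. V \<subseteq> scube d \<and>
          real (card V) \<le> 16 * s_par \<delta> d * exp (c1 * s_par \<delta> d) \<and>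
          16 * s_par \<delta> d * exp (c1 * s_par \<delta> d) \<le> 2 powr s_par \<delta> d \<and>
          real (card {A \<in> A_suc d (xi' d) (s_par \<delta> d) Mf Rf X.
                  real (packing_size d (orth_entries d n (xi' d) X (Mf A) A V) (real d powr (-8)))
                    \<ge> 2 powr (s_par \<delta> d / ln (real d))})
            \<ge> 1/8 * 2 powr (real d ^ 2 / 2))))))"
proof (intro exI[of _ "1/10::real"] conjI allI impI)
  show "0 < (1/10::real)" by simp
next
  fix c1 \<delta> :: real and k :: "nat \<Rightarrow> nat" and o1 :: "nat \<Rightarrow> real"
  assume h1: "0 < c1 \<and> c1 \<le> 1/10" and h2: "0 < \<delta> \<and> \<delta> < 1"
  show "\<exists>D. \<forall>d\<ge>D. even d \<longrightarrow>
    (\<forall>(n::nat) Mf Rf X.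
       is_protocol d (k d) n Mf Rf X \<and> protocol_succeeds d (xi' d) (s_par \<delta> d) Mf Rf X \<longrightarrow>
       (\<exists>V. V \<subseteq> scube d \<and>
          real (card V) \<le> 16 * s_par \<delta> d * exp (c1 * s_par \<delta> d) \<and>
          16 * s_par \<delta> d * exp (c1 * s_par \<delta> d) \<le> 2 powr s_par \<delta> d \<and>
          real (card {A \<in> A_suc d (xi' d) (s_par \<delta> d) Mf Rf X.
                  real (packing_size d (orth_entries d n (xi' d) X (Mf A) A V) (real d powr (-8)))
                    \<ge> 2 powr (s_par \<delta> d / ln (real d))})
            \<ge> 1/8 * 2 powr (real d ^ 2 / 2)))"
    using main_D[of c1 \<delta> k] h1 h2 by blast
qed


end
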